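(* Let $w\in S_n$ and $I\subseteq\mathrm{CInv}(w)$ nonempty. Choose $(w(i),w(j))\in I$ with $w(j)$ minimal, and let $w'$ be the permutation obtained by removing the covering inversion $(w(i),w(j))$ from $w$. Then $I\setminus\{(w(i),w(j))\}\subseteq\mathrm{CInv}(w')$.
   Context: Permutations are in one-line notation. A covering inversion of $w\in S_n$ is a pair of values $(w(i),w(j))$ with $i<j$, $w(i)>w(j)$, and $w(k)<w(j)$ for all $i<k<j$ (equivalently, $i$ is maximal among positions $i<j$ with $w(i)>w(j)$). $\mathrm{CInv}(w)$ is the set of covering inversions of $w$. Removing the covering inversion $(w(i),w(j))$ from $w$ means forming the permutation $w'$ obtained from $w$ by exchanging the values in positions $i$ and $j$. *)

theory Defs
  imports "HOL-Combinatorics.Permutations"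
begin

text \<open>Permutations of S_n are functions w :: nat => nat with w permutes {1..n};
  one-line notation: position i carries the value w i.\<close>

definition CInv :: "nat \<Rightarrow> (nat \<Rightarrow> nat) \<Rightarrow> (nat \<times> nat) set" where
  "CInv n w = {(w i, w j) | i j. i \<in> {1..n} \<and> j \<in> {1..n} \<and> i < j \<and> w j < w i \<and>
                  (\<forall>k. i < k \<and> k < j \<longrightarrow> w k < w j)}"

definition remove_cinv :: "(nat \<Rightarrow> nat) \<Rightarrow> nat \<Rightarrow> nat \<Rightarrow> (nat \<Rightarrow> nat)" where
  "remove_cinv w i j = w(i := w j, j := w i)"

end

theory Submission
  imports Defs
begin

theorem lemma5p6:
  fixes n :: nat and w :: "nat \<Rightarrow> nat" and I :: "(nat \<times> nat) set" and i j :: nat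
  assumes "w permutes {1..n}"
    and "I \<subseteq> CInv n w"
    and "i \<in> {1..n}" and "j \<in> {1..n}"
    and "(w i, w j) \<in> I"
    and "\<forall>p\<in>I. w j \<le> snd p"
  shows "I - {(w i, w j)} \<subseteq> CInv n (remove_cinv w i j)"
proof
  have inj: "inj w" using assms(1) by (rule permutes_inj)
  have "(w i, w j) \<in> CInv n w" using assms(2,5) by blast
  then obtain i' j' where "w i = w i'" "w j = w j'" "i' < j'" "w j' < w i'"
     "\<forall>k. i' < k \<and> k < j' \<longrightarrow> w k < w j'"
    unfolding CInv_def by blast
  moreover have "i' = i" "j' = j" using inj calculation(1,2) by (auto dest: injD)
  ultimately have ij: "i < j" "w j < w i" "\<And>k. i < k \<Longrightarrow> k < j \<Longrightarrow> w k < w j" by auto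
  fix p assume p: "p \<in> I - {(w i, w j)}"
  then have "p \<in> CInv n w" using assms(2) by blast
  then obtain a b where pab: "p = (w a, w b)" and ab: "a \<in> {1..n}" "b \<in> {1..n}" "a < b" "w b < w a"
    and cov: "\<And>k. a < k \<Longrightarrow> k < b \<Longrightarrow> w k < w b"
    unfolding CInv_def by blast
  have ge: "w j \<le> w b" using assms(6) p pab by auto
  have "b \<noteq> j"
  proof
    assume "b = j"
    then have "a \<noteq> i" using p pab by auto
    then consider "a < i" | "i < a" by linarith
    then show False
    proof cases
      case 1 then show ?thesis using cov[of i] ij \<open>b = j\<close> by auto
    next
      case 2 then show ?thesis using ij(3)[of a] ab \<open>b = j\<close> by auto
    qed
  qed
  then have wbj: "w j < w b" using ge inj by (metis injD le_neq_implies_less)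
  let ?w = "remove_cinv w i j"
  have wi: "?w i = w j" and wj: "?w j = w i" and wo: "\<And>k. k \<noteq> i \<Longrightarrow> k \<noteq> j \<Longrightarrow> ?w k = w k"
    using ij(1) by (auto simp: remove_cinv_def)
  have "a \<noteq> j" using wbj ab(4) ij by (metis less_asym)
  show "p \<in> CInv n ?w"
  proof (cases "b = i")
    case True
    have "\<forall>k. a < k \<and> k < j \<longrightarrow> ?w k < ?w j"
    proof (intro allI impI)
      fix k assume k: "a < k \<and> k < j"
      show "?w k < ?w j"
        using cov[of k] ij(2) ij(3)[of k] wi wj wo[of k] True k
        by (cases "k < i"; cases "k = i"; auto)
    qed
    moreover have "a < j" using ab True ij by auto
    moreover have "?w a = w a" using wo \<open>a \<noteq> j\<close> True ab by auto
    ultimately show ?thesis unfolding CInv_def using pab ab assms(4) True wj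
      by (smt (verit, best) mem_Collect_eq)
  next
    case bi: False
    show ?thesis
    proof (cases "a = i")
      case True
      have "j < b"
      proof (rule ccontr)
        assume "\<not> j < b"
        then have "b < j" using \<open>b \<noteq> j\<close> by auto
        then show False using ij(3)[of b] ab True wbj by auto
      qed
      have "\<forall>k. j < k \<and> k < b \<longrightarrow> ?w k < ?w b"
        using cov wo ij(1) True bi \<open>b \<noteq> j\<close> by auto
      moreover have "?w b = w b" using wo bi \<open>b \<noteq> j\<close> by auto
      ultimately show ?thesis unfolding CInv_def using pab ab assms(4) True wj \<open>j < b\<close>
        by (smt (verit, best) mem_Collect_eq)
    next
      case ai: False
      have wa: "?w a = w a" using wo ai \<open>a \<noteq> j\<close> by auto
      have wb: "?w b = w b" using wo bi \<open>b \<noteq> j\<close> by auto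
      have "\<forall>k. a < k \<and> k < b \<longrightarrow> ?w k < ?w b"
      proof (intro allI impI)
        fix k assume k: "a < k \<and> k < b"
        show "?w k < ?w b"
        proof (cases "k = j")
          case True
          have "\<not> w b < w i"
          proof
            assume "w b < w i"
            show False
            proof (cases "a < i")
              case True
              then show False using cov[of i] k \<open>k = j\<close> ij(1) \<open>w b < w i\<close> by auto
            next
              case False
              then have "i < a" using ai by auto
              then show False using ij(3)[of a] k \<open>k = j\<close> ab wbj by auto
            qed
          qed
          moreover have "w b \<noteq> w i" using inj bi by (metis injD)
          ultimately show ?thesis using wj wb True by auto
        next
          case False
          then show ?thesis using wi wo[of k] wb cov[of k] k wbj by (cases "k = i") auto
        qed
      qed
      then show ?thesis unfolding CInv_def using pab ab wa wb
        by (smt (verit, best) mem_Collect_eq)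
    qed
  qed
qed

end
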